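(* Let $X$ be a vector space, $S$ a proper subset of $X$ with $0\in S$, $p:X\to\mathbb{R}$ a sub-linear functional, and $F:S\to\mathbb{R}$ with $F(0)=0$ and $F(s_1)+F(s_2)\le p(s_1+s_2)$ for all $s_1,s_2\in S$. Then $F$ has an extension $\hat F:X\to\mathbb{R}$ with $\hat F(s)=F(s)$ for $s\in S$ and $\hat F(x_1)+\hat F(x_2)\le p(x_1+x_2)$ for all $x_1,x_2\in X$.
   Context: $X$ is a vector space over $K\in\{\mathbb{R},\mathbb{C}\}$. A functional $p$ is sub-linear if $p(x+y)\le p(x)+p(y)$ and $p(tx)=tp(x)$ for all $x,y\in X$ and $t\ge0$. *)

theory Defs
  imports "HOL-Analysis.Analysis"
begin

definition sublinear :: "('a::real_vector \<Rightarrow> real) \<Rightarrow> bool" where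
  "sublinear p \<longleftrightarrow> (\<forall>x y. p (x + y) \<le> p x + p y) \<and> (\<forall>x (t::real). t \<ge> 0 \<longrightarrow> p (t *\<^sub>R x) = t * p x)"

end

theory Submission
  imports Defs
begin

theorem corollary2:
  fixes S :: "'a::real_vector set" and p :: "'a \<Rightarrow> real" and F :: "'a \<Rightarrow> real"
  assumes "S \<subset> UNIV" and "0 \<in> S"
    and "sublinear p"
    and "F 0 = 0"
    and "\<forall>s1\<in>S. \<forall>s2\<in>S. F s1 + F s2 \<le> p (s1 + s2)"
  shows "\<exists>Fh :: 'a \<Rightarrow> real. (\<forall>s\<in>S. Fh s = F s) \<and> (\<forall>x1 x2. Fh x1 + Fh x2 \<le> p (x1 + x2))"
proof -
  have sub: "\<And>x y. p (x + y) \<le> p x + p y" using assms(3) unfolding sublinear_def by blast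
  have hom: "\<And>x t. t \<ge> 0 \<Longrightarrow> p (t *\<^sub>R x) = t * p x" using assms(3) unfolding sublinear_def by blast
  have p0: "p 0 = 0" using hom[of 0 0] by simp
  have neg: "\<And>y. - p (- y) \<le> p y" using sub[of y "- y" for y] p0 by (metis add.right_inverse add.commute le_add_same_cancel1 neg_le_iff_le add_le_cancel_left diff_le_eq diff_minus_eq_add minus_add_cancel)
  have Fp: "\<And>s. s \<in> S \<Longrightarrow> F s \<le> p s" using assms(2,4,5) by fastforce
  define Fh where "Fh x = (if x \<in> S then F x else - p (- x))" for x
  have "Fh x1 + Fh x2 \<le> p (x1 + x2)" for x1 x2
  proof (cases "x1 \<in> S"; cases "x2 \<in> S")
    assume "x1 \<in> S" "x2 \<in> S" then show ?thesis using assms(5) by (simp add: Fh_def)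
  next
    assume a: "x1 \<in> S" "x2 \<notin> S"
    have "p x1 \<le> p (x1 + x2) + p (- x2)" using sub[of "x1 + x2" "- x2"] by simp
    then show ?thesis using a Fp[of x1] by (simp add: Fh_def)
  next
    assume a: "x1 \<notin> S" "x2 \<in> S"
    have "p x2 \<le> p (x1 + x2) + p (- x1)" using sub[of "x1 + x2" "- x1"] by (simp add: algebra_simps)
    then show ?thesis using a Fp[of x2] by (simp add: Fh_def)
  next
    assume a: "x1 \<notin> S" "x2 \<notin> S"
    have "p (- (x1 + x2)) \<le> p (- x1) + p (- x2)" using sub[of "- x1" "- x2"] by (simp add: algebra_simps)
    then show ?thesis using a neg[of "x1 + x2"] by (simp add: Fh_def)
  qed
  then show ?thesis by (intro exI[of _ Fh]) (simp add: Fh_def)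
qed

end
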